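(* Let $K$ be an algebraically closed field of characteristic zero, $\mathcal{K} = K(t)$, and let $\beta \in \mathcal{K}$ with $h(\beta) = 1$ or $h(\beta) = 2$. Let \[\Phi_1(z,t) = z^2 - z + t,\] \[\Phi_3(z,t) = z^6 + z^5 + (3t+1)z^4 + (2t+1)z^3 + (3t^2+3t+1)z^2 + (t+1)^2 z + t^3 + 2t^2 + t + 1.\] Then there exists $c \in K$ such that $\Phi_3(\beta,t)$ vanishes at the place $t = c$ but neither $\Phi_1(\beta,t)$ nor $\beta$ vanishes at $t=c$.
   Context: The height $h(\beta)$ of $\beta \in K(t)$ is its degree as a rational function in $t$ (maximum of the degrees of numerator and denominator in lowest terms). An element of $K(t)$ vanishes at the place $t=c$ if its order of vanishing at $t=c$ is positive. ($\Phi_1,\Phi_3$ are the first and third dynatomic polynomials of $z^2+t$.) *)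

theory Defs
  imports "HOL-Computational_Algebra.Polynomial" "HOL-Computational_Algebra.Fraction_Field"
begin

type_synonym 'a ratfun = "'a poly fract"

definition T :: "'a::field ratfun" where
  "T = Fract [:0, 1:] 1"

definition height :: "'a::field ratfun \<Rightarrow> nat" where
  "height x = (THE n. \<exists>p q. q \<noteq> 0 \<and> coprime p q \<and> x = Fract p q \<and>
                             n = max (degree p) (degree q))"

text \<open>Order of vanishing at t = c is positive (the zero function vanishes everywhere).
  For a nonzero x = p/q the order at c is order c p - order c q, which is independent
  of the chosen representation.\<close>
definition vanishes_at :: "'a::field \<Rightarrow> 'a ratfun \<Rightarrow> bool" where
  "vanishes_at c x \<longleftrightarrow> x = 0 \<or>
     (\<exists>p q. p \<noteq> 0 \<and> q \<noteq> 0 \<and> x = Fract p q \<and> int (order c p) - int (order c q) > 0)"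

definition Phi1 :: "'a::field ratfun \<Rightarrow> 'a ratfun" where
  "Phi1 z = z^2 - z + T"

definition Phi3 :: "'a::field ratfun \<Rightarrow> 'a ratfun" where
  "Phi3 z = z^6 + z^5 + (3*T + 1) * z^4 + (2*T + 1) * z^3 + (3*T^2 + 3*T + 1) * z^2
            + (T + 1)^2 * z + T^3 + 2*T^2 + T + 1"

end

theory Submission
  imports Defs
begin


definition hom3 :: "'b::idom \<Rightarrow> 'b \<Rightarrow> 'b \<Rightarrow> 'b" where
  "hom3 p q t = p^6 + p^5*q + (3*t+1)*p^4*q^2 + (2*t+1)*p^3*q^3 + (3*t^2+3*t+1)*p^2*q^4
     + (t+1)^2*p*q^5 + (t^3+2*t^2+t+1)*q^6"

definition Gd :: "'b::idom \<Rightarrow> 'b \<Rightarrow> 'b \<Rightarrow> 'b \<Rightarrow> 'b" where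
  "Gd p q w t = (p^5 + p^4*w + p^3*w^2 + p^2*w^3 + p*w^4 + w^5) + q*(p^4 + p^3*w + p^2*w^2 + p*w^3 + w^4)
     + (3*t+1)*q^2*(p^3+p^2*w+p*w^2+w^3) + (2*t+1)*q^3*(p^2+p*w+w^2) + (3*t^2+3*t+1)*q^4*(p+w) + (t+1)^2*q^5"

lemma hom3_diff: "hom3 p q t - hom3 w q t = (p - w) * Gd p q w t"
  unfolding hom3_def Gd_def by algebra

lemma hom3_scale_gen: "hom3 (u*q) (v*q) t = q^6 * hom3 u v t"
  unfolding hom3_def by algebra

lemma hom3_scale: "hom3 (u*q) q t = q^6 * hom3 u 1 t"
  using hom3_scale_gen[of u q 1 t] by simp

lemma hom3_horner_gen: "hom3 u v t = (((((u+v)*u + (3*t+1)*v^2)*u + (2*t+1)*v^3)*u + (3*t^2+3*t+1)*v^4)*u + (t+1)^2*v^5)*u + (t^3+2*t^2+t+1)*v^6"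
  unfolding hom3_def by algebra

lemma hom3_horner: "hom3 u 1 t = (((((u+1)*u + (3*t+1))*u + (2*t+1))*u + (3*t^2+3*t+1))*u + (t+1)^2)*u + (t^3+2*t^2+t+1)"
  using hom3_horner_gen[of u 1 t] by simp

definition eq6 :: "'a::comm_ring_1 poly \<Rightarrow> 'a poly \<Rightarrow> bool" where
  "eq6 A B \<longleftrightarrow> (\<forall>k<6. coeff A k = coeff B k)"

lemma eq6_step: assumes "eq6 A B" shows "eq6 (A*U + C) (B*U + C)"
  using assms unfolding eq6_def by (auto simp: coeff_mult intro!: sum.cong)

lemma eq6_trans: "eq6 A B \<Longrightarrow> eq6 B C \<Longrightarrow> eq6 A C"
  unfolding eq6_def by auto

lemma eq6I: "coeff A 0 = coeff B 0 \<Longrightarrow> coeff A 1 = coeff B 1 \<Longrightarrow> coeff A 2 = coeff B 2 \<Longrightarrow>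
   coeff A 3 = coeff B 3 \<Longrightarrow> coeff A 4 = coeff B 4 \<Longrightarrow> coeff A 5 = coeff B 5 \<Longrightarrow> eq6 A B"
  unfolding eq6_def by (auto simp: less_Suc_eq numeral_eq_Suc)

definition Uc :: "'a::comm_ring_1 \<Rightarrow> 'a poly" where
  "Uc x = [:(0 + 0*x + 0*x^2), (- 3 - 2*x - 2*x^2), (- 51 - 30*x - 94*x^2), (- 5190 - 2220*x - 9164*x^2), (- 669503 - 287686*x - 1174710*x^2), (- 96085418 - 41332820*x - 168615284*x^2):]"

definition Cs1 :: "'a::comm_ring_1 \<Rightarrow> 'a poly" where
  "Cs1 x = [:3*x + 1, 3:]"

definition Cs2 :: "'a::comm_ring_1 \<Rightarrow> 'a poly" where
  "Cs2 x = [:2*x + 1, 2:]"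

definition Cs3 :: "'a::comm_ring_1 \<Rightarrow> 'a poly" where
  "Cs3 x = [:3*x^2 + 3*x + 1, 6*x + 3, 3:]"

definition Cs4 :: "'a::comm_ring_1 \<Rightarrow> 'a poly" where
  "Cs4 x = [:(x + 1)^2, 2*x + 2, 1:]"

definition Cs5 :: "'a::comm_ring_1 \<Rightarrow> 'a poly" where
  "Cs5 x = [:x^3 + 2*x^2 + x + 1, 3*x^2 + 4*x + 1, 3*x + 2, 1:]"

definition Sv1 :: "'a::comm_ring_1 \<Rightarrow> 'a poly" where
  "Sv1 x = [:(1 + 0*x + 0*x^2), (- 3 - 2*x - 2*x^2), (- 51 - 30*x - 94*x^2), (- 5190 - 2220*x - 9164*x^2), (- 669503 - 287686*x - 1174710*x^2), (- 96085418 - 41332820*x - 168615284*x^2):]"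

definition Sv2 :: "'a::comm_ring_1 \<Rightarrow> 'a poly" where
  "Sv2 x = [:(1 + 3*x + 0*x^2), (0 - 2*x - 2*x^2), (- 42 - 22*x - 82*x^2), (- 4628 - 1956*x - 8140*x^2), (- 595954 - 256230*x - 1045474*x^2), (- 85512460 - 36785964*x - 150063172*x^2):]"

definition Sv3 :: "'a::comm_ring_1 \<Rightarrow> 'a poly" where
  "Sv3 x = [:(1 + 2*x + 0*x^2), (5 - 5*x + 4*x^2), (231 + 101*x + 386*x^2), (22676 + 9850*x + 39840*x^2), (2907797 + 1250649*x + 5103662*x^2), (417576344 + 179619462*x + 732792392*x^2):]"

definition Sv4 :: "'a::comm_ring_1 \<Rightarrow> 'a poly" where
  "Sv4 x = [:(1 + 3*x + 3*x^2), (4 + 2*x + 2*x^2), (107 + 51*x + 182*x^2), (10518 + 4544*x + 18510*x^2), (1352432 + 581489*x + 2373444*x^2), (194231422 + 83549788*x + 340849390*x^2):]"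

definition Sv5 :: "'a::comm_ring_1 \<Rightarrow> 'a poly" where
  "Sv5 x = [:(1 + 2*x + 1*x^2), (- 1 - 3*x - 11*x^2), (- 254 - 103*x - 453*x^2), (- 26937 - 11557*x - 47194*x^2), (- 3454128 - 1486202*x - 6061399*x^2), (- 496079560 - 213394807*x - 870562984*x^2):]"

lemmas Udefs = Uc_def Cs1_def Cs2_def Cs3_def Cs4_def Cs5_def Sv1_def Sv2_def Sv3_def Sv4_def Sv5_def

lemma step1:
  fixes x :: "'a::field_char_0"
  assumes g: "x^3 + 2*x^2 + x + 1 = 0"
  shows "eq6 (Sv1 x * Uc x + Cs1 x) (Sv2 x)"
  apply (rule eq6I)
  apply (simp_all add: Udefs coeff_mult eval_nat_numeral atMost_Suc)
  apply (algebra | use g in algebra)+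
  done

lemma step2:
  fixes x :: "'a::field_char_0"
  assumes g: "x^3 + 2*x^2 + x + 1 = 0"
  shows "eq6 (Sv2 x * Uc x + Cs2 x) (Sv3 x)"
  apply (rule eq6I)
  apply (simp_all add: Udefs coeff_mult eval_nat_numeral atMost_Suc)
  apply (algebra | use g in algebra)+
  done

lemma step3:
  fixes x :: "'a::field_char_0"
  assumes g: "x^3 + 2*x^2 + x + 1 = 0"
  shows "eq6 (Sv3 x * Uc x + Cs3 x) (Sv4 x)"
  apply (rule eq6I)
  apply (simp_all add: Udefs coeff_mult eval_nat_numeral atMost_Suc)
  apply (algebra | use g in algebra)+
  done

lemma step4:
  fixes x :: "'a::field_char_0"
  assumes g: "x^3 + 2*x^2 + x + 1 = 0"
  shows "eq6 (Sv4 x * Uc x + Cs4 x) (Sv5 x)"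
  apply (rule eq6I)
  apply (simp_all add: Udefs coeff_mult eval_nat_numeral atMost_Suc)
  apply (algebra | use g in algebra)+
  done

lemma step5:
  fixes x :: "'a::field_char_0"
  assumes g: "x^3 + 2*x^2 + x + 1 = 0"
  shows "eq6 (Sv5 x * Uc x + Cs5 x) (0)"
  apply (rule eq6I)
  apply (simp_all add: Udefs coeff_mult eval_nat_numeral atMost_Suc)
  apply (algebra | use g in algebra)+
  done

lemma cert6:
  fixes x a b c :: "'a::field_char_0"
  assumes g: "x^3 + 2*x^2 + x + 1 = 0"
    and e3: "(- 5190 - 2220*x - 9164*x^2)*a + (- 51 - 30*x - 94*x^2)*b + (- 3 - 2*x - 2*x^2)*c = 0" and e4: "(- 669503 - 287686*x - 1174710*x^2)*a + (- 5190 - 2220*x - 9164*x^2)*b + (- 51 - 30*x - 94*x^2)*c = 0" and e5: "(- 96085418 - 41332820*x - 168615284*x^2)*a + (- 669503 - 287686*x - 1174710*x^2)*b + (- 5190 - 2220*x - 9164*x^2)*c = 0"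
  shows "a = 0"
proof -
  have "40276558539828907975 * a = (910172320307407243 - 3119751921206865534*x - 2074178317003460338*x^2) * ((- 5190 - 2220*x - 9164*x^2)*a + (- 51 - 30*x - 94*x^2)*b + (- 3 - 2*x - 2*x^2)*c) + (2878671757027816159 + 3475335588572104358*x + 1045681239490881506*x^2) * ((- 669503 - 287686*x - 1174710*x^2)*a + (- 5190 - 2220*x - 9164*x^2)*b + (- 51 - 30*x - 94*x^2)*c) + (- 106676477956947029 + 367569946143033002*x + 244095598010912614*x^2) * ((- 96085418 - 41332820*x - 168615284*x^2)*a + (- 669503 - 287686*x - 1174710*x^2)*b + (- 5190 - 2220*x - 9164*x^2)*c)"
    using g by algebra
  then have "40276558539828907975 * a = 0" by (simp only: e3 e4 e5 mult_zero_right add_0)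
  then show ?thesis by simp
qed

lemma cert5:
  fixes x a b :: "'a::field_char_0"
  assumes g: "x^3 + 2*x^2 + x + 1 = 0"
    and e3: "(- 5190 - 2220*x - 9164*x^2)*a + (- 51 - 30*x - 94*x^2)*b = 0" and e4: "(- 669503 - 287686*x - 1174710*x^2)*a + (- 5190 - 2220*x - 9164*x^2)*b = 0"
  shows "a = 0"
proof -
  have "15834489993617 * a = (- 712389435834 + 1919440631404*x + 1325797986852*x^2) * ((- 5190 - 2220*x - 9164*x^2)*a + (- 51 - 30*x - 94*x^2)*b) + (- 339874263699 - 426453257726*x - 132653776170*x^2) * ((- 669503 - 287686*x - 1174710*x^2)*a + (- 5190 - 2220*x - 9164*x^2)*b)"
    using g by algebra
  then have "15834489993617 * a = 0" by (simp only: e3 e4 mult_zero_right add_0)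
  then show ?thesis by simp
qed

lemma cert3:
  fixes x a :: "'a::field_char_0"
  assumes g: "x^3 + 2*x^2 + x + 1 = 0"
    and e2: "(- 51 - 30*x - 94*x^2) * a = 0"
  shows "a = 0"
proof -
  have "11095 * a = (1627 + 2174*x + 698*x^2) * ((- 51 - 30*x - 94*x^2) * a)"
    using g by algebra
  then have "11095 * a = 0" by (simp only: e2 mult_zero_right add_0)
  then show ?thesis by simp
qed

lemma Cs_eqs:
  fixes x :: "'a::field_char_0"
  shows "3*[:x,1:]+1 = Cs1 x" "2*[:x,1:]+1 = Cs2 x" "3*[:x,1:]^2+3*[:x,1:]+1 = Cs3 x"
    "([:x,1:]+1)^2 = Cs4 x" "[:x,1:]^3+2*[:x,1:]^2+[:x,1:]+1 = Cs5 x"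
  by (simp_all add: Udefs power2_eq_square power3_eq_cube numeral_poly algebra_simps one_pCons)

lemma Uc1: "Uc x + 1 = Sv1 (x::'a::field_char_0)"
  by (simp add: Udefs one_pCons)

lemma F6:
  fixes x :: "'a::field_char_0"
  assumes g: "x^3 + 2*x^2 + x + 1 = 0"
  shows "monom 1 6 dvd hom3 (Uc x) 1 [:x,1:]"
proof -
  let ?U = "Uc x"
  have a1: "eq6 ((?U+1)*?U + Cs1 x) (Sv2 x)" using step1[OF g] by (simp add: Uc1)
  have a2: "eq6 (((?U+1)*?U + Cs1 x)*?U + Cs2 x) (Sv3 x)"
    using eq6_trans[OF eq6_step[OF a1] step2[OF g]] .
  have a3: "eq6 ((((?U+1)*?U + Cs1 x)*?U + Cs2 x)*?U + Cs3 x) (Sv4 x)"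
    using eq6_trans[OF eq6_step[OF a2] step3[OF g]] .
  have a4: "eq6 (((((?U+1)*?U + Cs1 x)*?U + Cs2 x)*?U + Cs3 x)*?U + Cs4 x) (Sv5 x)"
    using eq6_trans[OF eq6_step[OF a3] step4[OF g]] .
  have a5: "eq6 ((((((?U+1)*?U + Cs1 x)*?U + Cs2 x)*?U + Cs3 x)*?U + Cs4 x)*?U + Cs5 x) 0"
    using eq6_trans[OF eq6_step[OF a4] step5[OF g]] .
  moreover have "hom3 (Uc x) 1 [:x,1:] = ((((((?U+1)*?U + Cs1 x)*?U + Cs2 x)*?U + Cs3 x)*?U + Cs4 x)*?U + Cs5 x)"
    unfolding hom3_horner by (simp only: Cs_eqs)
  ultimately have "eq6 (hom3 (Uc x) 1 [:x,1:]) 0" by simp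
  then show ?thesis unfolding eq6_def monom_1_dvd_iff' by simp
qed

lemma lin:
  fixes x :: "'a::field_char_0"
  assumes g: "x^3 + 2*x^2 + x + 1 = 0" and P0: "coeff P 0 = 0" and Q0: "coeff Q 0 \<noteq> 0"
    and m: "m \<le> 6" and dv: "monom 1 m dvd hom3 P Q [:x,1:]"
  shows "k < m \<Longrightarrow> coeff (P - Uc x * Q) k = 0"
proof -
  let ?T = "[:x,1:]" and ?W = "Uc x * Q"
  have "monom 1 6 dvd hom3 ?W Q ?T"
    using F6[OF g] by (simp add: hom3_scale)
  moreover have "monom 1 m dvd (monom 1 6 :: 'a poly)"
    using m by (metis le_add_diff_inverse mult_monom mult_1 dvd_triv_left)
  ultimately have "monom 1 m dvd hom3 ?W Q ?T" using dvd_trans by blast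
  with dv have "monom 1 m dvd (hom3 P Q ?T - hom3 ?W Q ?T)" by (rule dvd_diff)
  hence dv2: "monom 1 m dvd (P - ?W) * Gd P Q ?W ?T" by (simp add: hom3_diff)
  have x1: "x + 1 \<noteq> 0"
  proof
    assume "x + 1 = 0" hence "x = -1" by (simp add: eq_neg_iff_add_eq_0)
    with g show False by simp
  qed
  have pP: "poly P 0 = 0" using P0 by (simp add: poly_0_coeff_0)
  have pU: "poly (Uc x) 0 = 0" by (simp add: Udefs)
  have "poly (Gd P Q ?W ?T) 0 = (x+1)^2 * (poly Q 0)^5"
    by (simp add: Gd_def pP pU)
  hence "poly (Gd P Q ?W ?T) 0 = (x+1)^2 * (coeff Q 0)^5" by (simp add: poly_0_coeff_0)
  hence G0: "poly (Gd P Q ?W ?T) 0 \<noteq> 0" using x1 Q0 by simp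
  have "monom 1 m dvd (P - ?W)"
  proof (cases "P - ?W = 0")
    case True then show ?thesis by simp
  next
    case False
    have Gn: "Gd P Q ?W ?T \<noteq> 0" using G0 by auto
    have "m \<le> order 0 ((P - ?W) * Gd P Q ?W ?T)"
      using dv2 False Gn by (subst (asm) monom_1_dvd_iff) auto
    also have "\<dots> = order 0 (P - ?W)"
      using False Gn G0 by (simp add: order_mult order_0I)
    finally show ?thesis using False by (simp add: monom_1_dvd_iff)
  qed
  then show "k < m \<Longrightarrow> coeff (P - Uc x * Q) k = 0" by (simp add: monom_1_dvd_iff')
qed

lemma D6:
  fixes x :: "'a::field_char_0"
  assumes g: "x^3 + 2*x^2 + x + 1 = 0" and dP: "degree P \<le> 2" and dQ: "degree Q \<le> 2"
    and P0: "coeff P 0 = 0" and Q0: "coeff Q 0 \<noteq> 0" and dv: "monom 1 6 dvd hom3 P Q [:x,1:]"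
  shows False
proof -
  have e: "\<And>k. k < 6 \<Longrightarrow> coeff (P - Uc x * Q) k = 0"
    using lin[OF g P0 Q0 _ dv] by simp
  have cP: "\<And>k. k > 2 \<Longrightarrow> coeff P k = 0" using dP by (simp add: coeff_eq_0)
  have cQ: "\<And>k. k > 2 \<Longrightarrow> coeff Q k = 0" using dQ by (simp add: coeff_eq_0)
  have h3: "coeff (P - Uc x * Q) 3 = 0" "coeff (P - Uc x * Q) 4 = 0" "coeff (P - Uc x * Q) 5 = 0"
    using e by auto
  then have h: "(- 5190 - 2220*x - 9164*x^2)*coeff Q 0 + (- 51 - 30*x - 94*x^2)*coeff Q 1 + (- 3 - 2*x - 2*x^2)*coeff Q 2 = 0" "(- 669503 - 287686*x - 1174710*x^2)*coeff Q 0 + (- 5190 - 2220*x - 9164*x^2)*coeff Q 1 + (- 51 - 30*x - 94*x^2)*coeff Q 2 = 0" "(- 96085418 - 41332820*x - 168615284*x^2)*coeff Q 0 + (- 669503 - 287686*x - 1174710*x^2)*coeff Q 1 + (- 5190 - 2220*x - 9164*x^2)*coeff Q 2 = 0"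
    by (simp_all add: coeff_mult Udefs eval_nat_numeral atMost_Suc cP cQ, algebra+)
  show False using cert6[OF g h] Q0 by simp
qed

lemma D5:
  fixes x :: "'a::field_char_0"
  assumes g: "x^3 + 2*x^2 + x + 1 = 0" and dP: "degree P \<le> 2" and dQ: "degree Q \<le> 1"
    and P0: "coeff P 0 = 0" and Q0: "coeff Q 0 \<noteq> 0" and dv: "monom 1 5 dvd hom3 P Q [:x,1:]"
  shows False
proof -
  have e: "\<And>k. k < 5 \<Longrightarrow> coeff (P - Uc x * Q) k = 0"
    using lin[OF g P0 Q0 _ dv] by simp
  have cP: "\<And>k. k > 2 \<Longrightarrow> coeff P k = 0" using dP by (simp add: coeff_eq_0)
  have cQ: "\<And>k. k > 1 \<Longrightarrow> coeff Q k = 0" using dQ by (simp add: coeff_eq_0)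
  have h3: "coeff (P - Uc x * Q) 3 = 0" "coeff (P - Uc x * Q) 4 = 0"
    using e by auto
  then have h: "(- 5190 - 2220*x - 9164*x^2)*coeff Q 0 + (- 51 - 30*x - 94*x^2)*coeff Q 1 = 0" "(- 669503 - 287686*x - 1174710*x^2)*coeff Q 0 + (- 5190 - 2220*x - 9164*x^2)*coeff Q 1 = 0"
    by (simp_all add: coeff_mult Udefs eval_nat_numeral atMost_Suc cP cQ, algebra+)
  show False using cert5[OF g h] Q0 by simp
qed

lemma D3:
  fixes x :: "'a::field_char_0"
  assumes g: "x^3 + 2*x^2 + x + 1 = 0" and dP: "degree P \<le> 1" and dQ: "degree Q = 0"
    and P0: "coeff P 0 = 0" and Q0: "coeff Q 0 \<noteq> 0" and dv: "monom 1 3 dvd hom3 P Q [:x,1:]"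
  shows False
proof -
  have e: "\<And>k. k < 3 \<Longrightarrow> coeff (P - Uc x * Q) k = 0"
    using lin[OF g P0 Q0 _ dv] by simp
  have cP: "\<And>k. k > 1 \<Longrightarrow> coeff P k = 0" using dP by (simp add: coeff_eq_0)
  have cQ: "\<And>k. k > 0 \<Longrightarrow> coeff Q k = 0" using dQ by (simp add: coeff_eq_0)
  have h3: "coeff (P - Uc x * Q) 2 = 0"
    using e by auto
  then have h: "(- 51 - 30*x - 94*x^2) * coeff Q 0 = 0"
    by (simp add: coeff_mult Udefs eval_nat_numeral atMost_Suc cP cQ)
  show False using cert3[OF g h] Q0 by simp
qed


lemma poly_X: "poly [:0,1:] (c::'a::comm_ring_1) = c" by simp
lemma poly_hom3: "poly (hom3 p q [:0,1:]) c = hom3 (poly p c) (poly q c) (c::'a::idom)"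
  unfolding hom3_def by (simp only: poly_add poly_mult poly_power poly_numeral poly_1 poly_X)
lemma pcompose_power: "pcompose (a ^ n) r = (pcompose a r) ^ n"
  by (induction n) (simp_all add: pcompose_mult pcompose_1)
lemma pcompose_numeral: "pcompose (numeral n) (r::'a::idom poly) = numeral n"
  by (simp add: numeral_poly)
lemma pcompose_hom3: "pcompose (hom3 p q t) (r::'a::idom poly) = hom3 (pcompose p r) (pcompose q r) (pcompose t r)"
  by (simp add: hom3_def pcompose_add pcompose_mult pcompose_1 pcompose_power pcompose_numeral)

definition "d6 a b a' b' (c::'a::field_char_0) = 6*a^5*a'"
definition "d5 a b a' b' (c::'a::field_char_0) = 5*a^4*a'*b + a^5*b'"
definition "d4 a b a' b' (c::'a::field_char_0) = 3*a^4*b^2 + (3*c+1)*(4*a^3*a'*b^2 + 2*a^4*b*b')"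
definition "d3 a b a' b' (c::'a::field_char_0) = 2*a^3*b^3 + (2*c+1)*(3*a^2*a'*b^3 + 3*a^3*b^2*b')"
definition "d2 a b a' b' (c::'a::field_char_0) = (6*c+3)*a^2*b^4 + (3*c^2+3*c+1)*(2*a*a'*b^4 + 4*a^2*b^3*b')"
definition "d1 a b a' b' (c::'a::field_char_0) = 2*(c+1)*a*b^5 + (c+1)^2*(a'*b^5 + 5*a*b^4*b')"
definition "d0 a b a' b' (c::'a::field_char_0) = (3*c^2+4*c+1)*b^6 + (c^3+2*c^2+c+1)*(6*b^5*b')"

context
  fixes p q :: "'a::field_char_0 poly" and c :: 'a
begin
abbreviation "pa \<equiv> poly p c"
abbreviation "pb \<equiv> poly q c"
abbreviation "pa' \<equiv> poly (pderiv p) c"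
abbreviation "pb' \<equiv> poly (pderiv q) c"
lemma dt6: "poly (pderiv (p^6)) c = d6 pa pb pa' pb' c"
  unfolding d6_def by (simp add: pderiv_add pderiv_mult pderiv_power pderiv_pCons numeral_poly pderiv_smult; algebra)
lemma dt5: "poly (pderiv (p^5*q)) c = d5 pa pb pa' pb' c"
  unfolding d5_def by (simp add: pderiv_add pderiv_mult pderiv_power pderiv_pCons numeral_poly pderiv_smult; algebra)
lemma dt4: "poly (pderiv ((3*[:0,1:]+1)*p^4*q^2)) c = d4 pa pb pa' pb' c"
  unfolding d4_def by (simp add: pderiv_add pderiv_mult pderiv_power pderiv_pCons numeral_poly pderiv_smult; algebra)
lemma dt3: "poly (pderiv ((2*[:0,1:]+1)*p^3*q^3)) c = d3 pa pb pa' pb' c"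
  unfolding d3_def by (simp add: pderiv_add pderiv_mult pderiv_power pderiv_pCons numeral_poly pderiv_smult; algebra)
lemma dt2: "poly (pderiv ((3*[:0,1:]^2+3*[:0,1:]+1)*p^2*q^4)) c = d2 pa pb pa' pb' c"
  unfolding d2_def by (simp add: pderiv_add pderiv_mult pderiv_power pderiv_pCons numeral_poly pderiv_smult; algebra)
lemma dt1: "poly (pderiv (([:0,1:]+1)^2*p*q^5)) c = d1 pa pb pa' pb' c"
  unfolding d1_def by (simp add: pderiv_add pderiv_mult pderiv_power pderiv_pCons numeral_poly pderiv_smult; algebra)
lemma dt0: "poly (pderiv (([:0,1:]^3+2*[:0,1:]^2+[:0,1:]+1)*q^6)) c = d0 pa pb pa' pb' c"
  unfolding d0_def by (simp add: pderiv_add pderiv_mult pderiv_power pderiv_pCons numeral_poly pderiv_smult; algebra)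

lemma pderiv_hom3: "poly (pderiv (hom3 p q [:0,1:])) c =
   d6 pa pb pa' pb' c + d5 pa pb pa' pb' c + d4 pa pb pa' pb' c + d3 pa pb pa' pb' c
   + d2 pa pb pa' pb' c + d1 pa pb pa' pb' c + d0 pa pb pa' pb' c"
  unfolding hom3_def by (simp only: pderiv_add poly_add dt6 dt5 dt4 dt3 dt2 dt1 dt0)
end

lemma Dcalc:
  fixes a b a' b' c :: "'a::field_char_0"
  assumes h1: "6*a = (4*c-1)*b" and h2: "16*c^2+4*c+7 = 0"
  shows "3*(d6 a b a' b' c + d5 a b a' b' c + d4 a b a' b' c + d3 a b a' b' c
   + d2 a b a' b' c + d1 a b a' b' c + d0 a b a' b' c) = b^6*(8*c-2)"
  unfolding d6_def d5_def d4_def d3_def d2_def d1_def d0_def using h1 h2 by algebra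

lemma hom3_F1: "hom3 a b (c::'a::idom) = (a^2 - a*b + c*b^2) * (a^4 + 2*a^3*b + (3+2*c)*a^2*b^2 + (4+2*c)*a*b^3 + (5+2*c+c^2)*b^4) + (6*a + (1-4*c)*b)*b^5"
  unfolding hom3_def by algebra

definition F1p :: "'a::comm_ring_1 poly \<Rightarrow> 'a poly \<Rightarrow> 'a poly" where
  "F1p p q = p^2 - p*q + [:0,1:]*q^2"

lemma B_lemma:
  fixes p q :: "'a::field_char_0 poly"
  assumes H: "poly (hom3 p q [:0,1:]) c = 0" and F: "poly (F1p p q) c = 0" and pc: "poly p c \<noteq> 0"
  shows "16*c^2+4*c+7 = 0 \<and> order c (hom3 p q [:0,1:]) = 1"
proof -
  have Hab: "hom3 (poly p c) (poly q c) c = 0" using H by (simp only: poly_hom3)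
  have Fab: "(poly p c)^2 - (poly p c)*(poly q c) + c*(poly q c)^2 = 0" using F by (simp add: F1p_def)
  have b0: "poly q c \<noteq> 0"
  proof
    assume "poly q c = 0" with Fab pc show False by simp
  qed
  have "(6*poly p c + (1-4*c)*poly q c)*(poly q c)^5 = 0" using Hab Fab hom3_F1[of "poly p c" "poly q c" c] by simp
  hence "6*poly p c + (1-4*c)*poly q c = 0" using b0 by simp
  hence L: "6*poly p c = (4*c-1)*poly q c" by algebra
  have "(poly q c)^2*(16*c^2+4*c+7) = 0" using L Fab by algebra
  hence E: "16*c^2+4*c+7 = 0" using b0 by simp
  have c8: "8*c - 2 \<noteq> 0"
  proof
    assume "8*c - 2 = 0"
    hence "16*c^2+4*c+7 = 9" by algebra
    with E show False by simp
  qed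
  have "3 * poly (pderiv (hom3 p q [:0,1:])) c = (poly q c)^6*(8*c-2)"
    unfolding pderiv_hom3 by (rule Dcalc[OF L E])
  hence D: "poly (pderiv (hom3 p q [:0,1:])) c \<noteq> 0" using b0 c8 by (metis mult_eq_0_iff power_eq_0_iff zero_neq_numeral mult_zero_right)
  hence Hn: "hom3 p q [:0,1:] \<noteq> 0" by (metis pderiv_0 poly_0)
  have "order c (hom3 p q [:0,1:]) = Suc (order c (pderiv (hom3 p q [:0,1:])))"
    using order_pderiv[OF Hn H] .
  also have "\<dots> = 1" using D by (simp add: order_0I)
  finally show ?thesis using E by simp
qed



lemma deg_term: "degree (c * p^i * q^j) \<le> degree c + i * degree p + j * degree (q::'a::idom poly)"
proof -
  have a: "degree (p^i) \<le> i * degree p" using degree_power_le[of p i] by (simp add: mult.commute)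
  have b: "degree (q^j) \<le> j * degree q" using degree_power_le[of q j] by (simp add: mult.commute)
  have "degree (c * p^i * q^j) \<le> degree (c * p^i) + degree (q^j)" by (rule degree_mult_le)
  also have "\<dots> \<le> degree c + degree (p^i) + degree (q^j)" using degree_mult_le[of c "p^i"] by simp
  also have "\<dots> \<le> degree c + i * degree p + j * degree q" using a b by simp
  finally show ?thesis .
qed

lemma dX1: "degree (3*[:0,1:]+1 :: 'a::field_char_0 poly) \<le> 1"
  by (simp add: one_pCons numeral_poly)
lemma dX2: "degree (2*[:0,1:]+1 :: 'a::field_char_0 poly) \<le> 1"
  by (simp add: one_pCons numeral_poly)
lemma dX3: "degree (3*[:0,1:]^2+3*[:0,1:]+1 :: 'a::field_char_0 poly) \<le> 2"
  by (simp add: one_pCons numeral_poly power2_eq_square)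
lemma dX4: "degree (([:0,1:]+1)^2 :: 'a::field_char_0 poly) \<le> 2"
  by (simp add: one_pCons numeral_poly power2_eq_square)
lemma dX5: "degree ([:0,1:]^3+2*[:0,1:]^2+[:0,1:]+1 :: 'a::field_char_0 poly) = 3"
  by (simp add: one_pCons numeral_poly power2_eq_square power3_eq_cube)

lemma degH_1:
  fixes p q :: "'a::field_char_0 poly"
  assumes q0: "q \<noteq> 0" and dpq: "degree p \<le> degree q"
  shows "degree (hom3 p q [:0,1:]) = 6 * degree q + 3"
proof -
  let ?X = "[:0,1:] :: 'a poly"
  define d where "d = degree q"
  have t6: "degree (p^6) \<le> 6*d" using degree_power_le[of p 6] dpq d_def by simp
  have t5: "degree (p^5*q) \<le> 6*d" using deg_term[of 1 p 5 q 1] dpq d_def by simp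
  have t4: "degree ((3*?X+1)*p^4*q^2) \<le> 6*d+2"
    by (rule le_trans[OF deg_term]) (use dX1[where 'a='a] dpq d_def in linarith)
  have t3: "degree ((2*?X+1)*p^3*q^3) \<le> 6*d+2"
    by (rule le_trans[OF deg_term]) (use dX2[where 'a='a] dpq d_def in linarith)
  have t2: "degree ((3*?X^2+3*?X+1)*p^2*q^4) \<le> 6*d+2"
    by (rule le_trans[OF deg_term]) (use dX3[where 'a='a] dpq d_def in linarith)
  have t1a: "degree ((?X+1)^2*p*q^5) \<le> degree ((?X+1)^2) + degree p + 5 * degree q"
    using deg_term[of "(?X+1)^2" p 1 q 5] by simp
  have t1: "degree ((?X+1)^2*p*q^5) \<le> 6*d+2" using t1a dX4[where 'a='a] dpq d_def by linarith
  have R: "degree (p^6 + p^5*q + (3*?X+1)*p^4*q^2 + (2*?X+1)*p^3*q^3 + (3*?X^2+3*?X+1)*p^2*q^4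
     + (?X+1)^2*p*q^5) \<le> 6*d+2"
    using t6 t5 t4 t3 t2 t1 by (intro degree_add_le) auto
  have c0: "?X^3+2*?X^2+?X+1 \<noteq> 0" using dX5[where 'a='a] by auto
  have T0: "degree ((?X^3+2*?X^2+?X+1)*q^6) = 6*d+3"
    using dX5[where 'a='a] c0 q0 by (simp add: degree_mult_eq degree_power_eq d_def)
  show ?thesis unfolding hom3_def
    by (subst degree_add_eq_right) (use R T0 d_def in auto)
qed

lemma degH_2:
  fixes p q :: "'a::field_char_0 poly"
  assumes dpq: "degree q < degree p"
  shows "degree (hom3 p q [:0,1:]) = 6 * degree p"
proof -
  let ?X = "[:0,1:] :: 'a poly"
  define d where "d = degree p"
  define e where "e = degree q"
  have ed: "e + 1 \<le> d" using dpq d_def e_def by simp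
  have p0: "p \<noteq> 0" using dpq by auto
  have t6: "degree (p^6) = 6*d" using p0 by (simp add: degree_power_eq d_def)
  have t5: "degree (p^5*q) \<le> 5*d + e" using deg_term[of 1 p 5 q 1] d_def e_def by simp
  have t4: "degree ((3*?X+1)*p^4*q^2) \<le> 1 + 4*d + 2*e"
    by (rule le_trans[OF deg_term]) (use dX1[where 'a='a] d_def e_def in linarith)
  have t3: "degree ((2*?X+1)*p^3*q^3) \<le> 1 + 3*d + 3*e"
    by (rule le_trans[OF deg_term]) (use dX2[where 'a='a] d_def e_def in linarith)
  have t2: "degree ((3*?X^2+3*?X+1)*p^2*q^4) \<le> 2 + 2*d + 4*e"
    by (rule le_trans[OF deg_term]) (use dX3[where 'a='a] d_def e_def in linarith)
  have t1a: "degree ((?X+1)^2*p*q^5) \<le> degree ((?X+1)^2) + degree p + 5 * degree q"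
    using deg_term[of "(?X+1)^2" p 1 q 5] by simp
  have t1: "degree ((?X+1)^2*p*q^5) \<le> 2 + d + 5*e" using t1a dX4[where 'a='a] d_def e_def by linarith
  have t0: "degree ((?X^3+2*?X^2+?X+1)*q^6) \<le> 3 + 6*e" using deg_term[of "?X^3+2*?X^2+?X+1" 1 0 q 6] dX5[where 'a='a] e_def by simp
  have R: "degree (p^5*q + (3*?X+1)*p^4*q^2 + (2*?X+1)*p^3*q^3 + (3*?X^2+3*?X+1)*p^2*q^4
     + (?X+1)^2*p*q^5 + (?X^3+2*?X^2+?X+1)*q^6) < 6*d"
  proof -
    have "degree (p^5*q + (3*?X+1)*p^4*q^2 + (2*?X+1)*p^3*q^3 + (3*?X^2+3*?X+1)*p^2*q^4
     + (?X+1)^2*p*q^5 + (?X^3+2*?X^2+?X+1)*q^6) \<le> 6*d - 1"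
      using t5 t4 t3 t2 t1 t0 ed by (intro degree_add_le) auto
    moreover have "d \<ge> 1" using ed by simp
    ultimately show ?thesis by simp
  qed
  have "hom3 p q ?X = p^6 + (p^5*q + (3*?X+1)*p^4*q^2 + (2*?X+1)*p^3*q^3 + (3*?X^2+3*?X+1)*p^2*q^4
     + (?X+1)^2*p*q^5 + (?X^3+2*?X^2+?X+1)*q^6)"
    unfolding hom3_def by (simp add: add.assoc)
  also have "degree \<dots> = 6*d" using R t6 by (subst degree_add_eq_left) auto
  finally show ?thesis using d_def by simp
qed

lemma degree_le_sum_order:
  fixes p :: "'a::alg_closed_field poly"
  assumes "p \<noteq> 0"
  shows "degree p \<le> (\<Sum>x | poly p x = 0. order x p)"
  using assms
proof (induction "degree p" arbitrary: p rule: less_induct)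
  case (less p)
  show ?case
  proof (cases "degree p = 0")
    case True then show ?thesis by simp
  next
    case False
    then obtain x where x: "poly p x = 0" using alg_closed_imp_poly_has_root by blast
    then obtain r where r: "p = [:-x,1:] * r" using poly_eq_0_iff_dvd by (metis dvdE)
    have r0: "r \<noteq> 0" using less.prems r by auto
    have "degree ([:-x,1:] * r) = degree [:-x,1:] + degree r" by (rule degree_mult_eq) (use r0 in auto)
    hence dp: "degree p = Suc (degree r)" using r by simp
    have IH: "degree r \<le> (\<Sum>y | poly r y = 0. order y r)" using less.hyps[of r] dp r0 by simp
    let ?Z = "{y. poly p y = 0}"
    have fin: "finite ?Z" using less.prems poly_roots_finite by blast
    have sub: "{y. poly r y = 0} \<subseteq> ?Z" using r by auto
    have pr: "[:-x,1:] * r \<noteq> 0" using less.prems r by simp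
    have ord: "\<And>y. order y p = order y [:-x,1:] + order y r"
      by (simp only: r order_mult[OF pr])
    have s1: "(\<Sum>y | poly r y = 0. order y r) = (\<Sum>y\<in>?Z. order y r)"
      using fin sub by (intro sum.mono_neutral_left) (auto simp: order_0I)
    have ox: "order x [:-x,1:] = 1" using order_power_n_n[of x 1] by simp
    have s2: "1 \<le> (\<Sum>y\<in>?Z. order y [:-x,1:])"
      using member_le_sum[of x ?Z "\<lambda>y. order y [:-x,1:]"] fin x ox by simp
    have "(\<Sum>y\<in>?Z. order y p) = (\<Sum>y\<in>?Z. order y [:-x,1:]) + (\<Sum>y\<in>?Z. order y r)"
      unfolding ord by (rule sum.distrib)
    then show ?thesis using dp IH s1 s2 by simp
  qed
qed



lemma shift_dvd:
  fixes H :: "'a::field_char_0 poly"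
  assumes "[:-x,1:]^m dvd H" shows "monom 1 m dvd pcompose H [:x,1:]"
proof -
  obtain K where K: "H = [:-x,1:]^m * K" using assms by (elim dvdE)
  have "pcompose H [:x,1:] = (pcompose [:-x,1:] [:x,1:])^m * pcompose K [:x,1:]"
    by (simp only: K pcompose_mult pcompose_power)
  also have "pcompose [:-x,1:] [:x,1:] = [:0,1:]" by (simp add: pcompose_pCons)
  finally show ?thesis by (simp add: monom_altdef)
qed

lemma A_bound:
  fixes p q :: "'a::field_char_0 poly"
  assumes g: "c^3 + 2*c^2 + c + 1 = 0" and pc: "poly p c = 0" and qc: "poly q c \<noteq> 0"
    and cs: "(degree p \<le> 2 \<and> degree q \<le> 2 \<and> m = 6) \<or> (degree p \<le> 2 \<and> degree q \<le> 1 \<and> m = 5)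
       \<or> (degree p \<le> 1 \<and> degree q = 0 \<and> m = 3)"
  shows "\<not> [:-c,1:]^m dvd hom3 p q [:0,1:]"
proof
  assume dv: "[:-c,1:]^m dvd hom3 p q [:0,1:]"
  define P where "P = pcompose p [:c,1:]"
  define Q where "Q = pcompose q [:c,1:]"
  have "monom 1 m dvd pcompose (hom3 p q [:0,1:]) [:c,1:]" using shift_dvd[OF dv] .
  moreover have "pcompose (hom3 p q [:0,1:]) [:c,1:] = hom3 P Q [:c,1:]"
    unfolding pcompose_hom3 P_def Q_def by (simp add: pcompose_pCons)
  ultimately have dvP: "monom 1 m dvd hom3 P Q [:c,1:]" by simp
  have P0: "coeff P 0 = 0" by (simp add: P_def pc)
  have Q0: "coeff Q 0 \<noteq> 0" by (simp add: Q_def qc)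
  have dP: "degree P = degree p" by (simp add: P_def degree_pcompose)
  have dQ: "degree Q = degree q" by (simp add: Q_def degree_pcompose)
  from cs show False
  proof (elim disjE conjE)
    assume "degree p \<le> 2" "degree q \<le> 2" "m = 6"
    then show False using D6[OF g _ _ P0 Q0] dvP dP dQ by simp
  next
    assume "degree p \<le> 2" "degree q \<le> 1" "m = 5"
    then show False using D5[OF g _ _ P0 Q0] dvP dP dQ by simp
  next
    assume "degree p \<le> 1" "degree q = 0" "m = 3"
    then show False using D3[OF g _ _ P0 Q0] dvP dP dQ by simp
  qed
qed

lemma core:
  fixes p q :: "'a::{alg_closed_field,field_char_0} poly"
  assumes cop: "coprime p q" and q0: "q \<noteq> 0"
    and h: "max (degree p) (degree q) = 1 \<or> max (degree p) (degree q) = 2"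
  shows "\<exists>c. poly (hom3 p q [:0,1:]) c = 0 \<and> poly p c \<noteq> 0 \<and> poly (F1p p q) c \<noteq> 0"
proof (rule ccontr)
  assume nc: "\<not> (\<exists>c. poly (hom3 p q [:0,1:]) c = 0 \<and> poly p c \<noteq> 0 \<and> poly (F1p p q) c \<noteq> 0)"
  define H where "H = hom3 p q [:0,1:]"
  have common: "poly q c \<noteq> 0" if pc: "poly p c = 0" for c
  proof
    assume qc: "poly q c = 0"
    have "[:-c,1:] dvd p" "[:-c,1:] dvd q" using pc qc by (simp_all add: poly_eq_0_iff_dvd)
    hence "is_unit [:-c,1:]" using cop coprime_common_divisor by blast
    thus False by (simp add: is_unit_iff_degree)
  qed
  have p0: "p \<noteq> 0"
  proof
    assume pz: "p = 0"
    then have "is_unit q" using cop by simp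
    hence "degree q = 0" using q0 by (simp add: is_unit_iff_degree)
    with h pz show False by simp
  qed
  define M :: nat where "M = (if degree p \<le> degree q then 5 else if degree p = 2 then 4 else 2)"
  have Abd: "order c H \<le> M" if pc: "poly p c = 0" and Hc: "poly H c = 0" for c
  proof -
    have qc: "poly q c \<noteq> 0" using common pc .
    have "hom3 (poly p c) (poly q c) c = 0" using Hc by (simp add: H_def poly_hom3)
    hence "(c^3+2*c^2+c+1) * (poly q c)^6 = 0" using pc by (simp add: hom3_def)
    hence g: "c^3+2*c^2+c+1 = 0" using qc by simp
    have cs: "(degree p \<le> 2 \<and> degree q \<le> 2 \<and> Suc M = 6) \<or> (degree p \<le> 2 \<and> degree q \<le> 1 \<and> Suc M = 5)
       \<or> (degree p \<le> 1 \<and> degree q = 0 \<and> Suc M = 3)"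
      using h unfolding M_def by (auto split: if_splits)
    have "\<not> [:-c,1:]^(Suc M) dvd H"
      unfolding H_def by (rule A_bound[OF g pc qc cs])
    hence "\<not> (H = 0 \<or> Suc M \<le> order c H)" using order_divides[of c "Suc M" H] by blast
    thus ?thesis by linarith
  qed
  have Bbd: "poly [:7,4,16:] c = 0 \<and> order c H = 1" if Hc: "poly H c = 0" and pc: "poly p c \<noteq> 0" for c
  proof -
    have "poly (F1p p q) c = 0" using nc Hc pc unfolding H_def by blast
    from B_lemma[OF Hc[unfolded H_def] this pc] have "16*c^2+4*c+7 = 0" "order c H = 1"
      by (simp_all add: H_def)
    moreover from this(1) have "poly [:7,4,16:] c = 0" by simp algebra
    ultimately show ?thesis by simp
  qed
  have degH: "M * degree p + 2 < degree H"
  proof (cases "degree p \<le> degree q")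
    case True
    then show ?thesis using degH_1[OF q0 True] unfolding H_def M_def by simp
  next
    case False
    then have lt: "degree q < degree p" by simp
    have "degree p = 1 \<or> degree p = 2" using h False by (simp add: max_def split: if_splits)
    then show ?thesis using degH_2[OF lt] False unfolding H_def M_def by auto
  qed
  have H0: "H \<noteq> 0" using degH by auto
  define ZH where "ZH = {c. poly H c = 0}"
  define ZP where "ZP = {c. poly p c = 0}"
  define ZE where "ZE = {c. poly [:7,4,16::'a:] c = 0}"
  have fZP: "finite ZP" unfolding ZP_def using p0 by (rule poly_roots_finite)
  have fZE: "finite ZE" unfolding ZE_def by (rule poly_roots_finite) simp
  have sub: "ZH \<subseteq> ZP \<union> (ZE - ZP)"
    using Bbd unfolding ZH_def ZP_def ZE_def by auto
  have "degree H \<le> (\<Sum>c\<in>ZH. order c H)" unfolding ZH_def by (rule degree_le_sum_order[OF H0])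
  also have "\<dots> \<le> (\<Sum>c\<in>ZH. (if poly p c = 0 then M else 1))"
    by (rule sum_mono) (use Abd Bbd in \<open>auto simp: ZH_def\<close>)
  also have "\<dots> \<le> (\<Sum>c\<in>ZP \<union> (ZE - ZP). (if poly p c = 0 then M else 1))"
    by (rule sum_mono2) (use sub fZP fZE in auto)
  also have "\<dots> = (\<Sum>c\<in>ZP. (if poly p c = 0 then M else 1)) + (\<Sum>c\<in>ZE - ZP. (if poly p c = 0 then M else 1))"
    by (rule sum.union_disjoint) (use fZP fZE in auto)
  also have "\<dots> = M * card ZP + card (ZE - ZP)"
    unfolding ZP_def by simp
  also have "\<dots> \<le> M * degree p + 2"
  proof -
    have a: "card ZP \<le> degree p" unfolding ZP_def by (rule card_poly_roots_bound[OF p0])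
    have m: "M * card ZP \<le> M * degree p" using a by (rule mult_le_mono2)
    have b: "card (ZE - ZP) \<le> card ZE" using fZE by (intro card_mono) auto
    have "card ZE \<le> degree [:7,4,16::'a:]" unfolding ZE_def by (rule card_poly_roots_bound) simp
    hence e: "card ZE \<le> 2" by simp
    show ?thesis using m b e by linarith
  qed
  finally show False using degH by simp
qed



lemma Fract_add1: "Fract (a+b) 1 = Fract a 1 + Fract (b::'a::idom) 1" by simp
lemma Fract_mult1: "Fract (a*b) 1 = Fract a 1 * Fract (b::'a::idom) 1" by simp
lemma Fract_one1: "Fract (1::'a::idom) 1 = 1" by (simp add: One_fract_def)
lemma Fract_power1: "Fract (a^n) 1 = (Fract (a::'a::idom) 1)^n"
proof (induction n)
  case 0 then show ?case by (simp add: Fract_one1)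
next
  case (Suc n)
  have "Fract (a^Suc n) 1 = Fract a 1 * Fract (a^n) 1" by (simp only: power_Suc Fract_mult1)
  then show ?case using Suc by simp
qed
lemma Fract_diff1: "Fract (a-b) 1 = Fract a 1 - Fract (b::'a::idom) 1" by simp
lemma Fract_numeral1: "Fract (numeral n) 1 = (numeral n :: 'a::idom fract)"
  by (metis Fract_of_nat_eq of_nat_numeral)
lemma Fract_hom3: "Fract (hom3 p q t) 1 = hom3 (Fract p 1) (Fract q 1) (Fract (t::'a::idom) 1)"
  unfolding hom3_def by (simp only: Fract_add1 Fract_mult1 Fract_power1 Fract_numeral1 Fract_one1)

lemma Fract_div1: "b \<noteq> 0 \<Longrightarrow> Fract a b = Fract a 1 / Fract (b::'a::idom) 1"
  by (simp add: divide_fract)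
lemma Fract1_nz: "b \<noteq> 0 \<Longrightarrow> Fract (b::'a::idom) 1 \<noteq> 0"
  by (simp add: Zero_fract_def eq_fract)

lemma Phi3_eq:
  fixes p q :: "'a::field poly"
  assumes q0: "q \<noteq> 0"
  shows "Phi3 (Fract p q) = Fract (hom3 p q [:0,1:]) (q^6)"
proof -
  define P where "P = Fract p 1"
  define Q where "Q = Fract q 1"
  have Q0: "Q \<noteq> 0" using Fract1_nz[OF q0] Q_def by simp
  have b: "Fract p q = P / Q" using Fract_div1[OF q0] P_def Q_def by simp
  have "Phi3 (Fract p q) = hom3 (P/Q) 1 T" unfolding b Phi3_def hom3_def
    by (simp only: power_one mult_1_right add.assoc)
  also have "\<dots> = hom3 P Q T / Q^6"
  proof -
    have "hom3 P Q T = Q^6 * hom3 (P/Q) 1 T"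
      using hom3_scale_gen[of "P/Q" Q 1 T] Q0 by simp
    thus ?thesis using Q0 by (simp add: nonzero_eq_divide_eq mult.commute)
  qed
  also have "hom3 P Q T = Fract (hom3 p q [:0,1:]) 1" unfolding Fract_hom3 P_def Q_def T_def ..
  also have "Q^6 = Fract (q^6) 1" unfolding Q_def Fract_power1 ..
  finally show ?thesis using q0 by (simp add: divide_fract)
qed

lemma Phi1_eq:
  fixes p q :: "'a::field poly"
  assumes q0: "q \<noteq> 0"
  shows "Phi1 (Fract p q) = Fract (F1p p q) (q^2)"
proof -
  define P where "P = Fract p 1"
  define Q where "Q = Fract q 1"
  have Q0: "Q \<noteq> 0" using Fract1_nz[OF q0] Q_def by simp
  have b: "Fract p q = P / Q" using Fract_div1[OF q0] P_def Q_def by simp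
  have "Phi1 (Fract p q) = (P^2 - P*Q + T*Q^2) / Q^2" unfolding b Phi1_def using Q0
    by (simp add: field_simps power2_eq_square)
  also have "P^2 - P*Q + T*Q^2 = Fract (F1p p q) 1"
    unfolding F1p_def P_def Q_def T_def by (simp only: Fract_add1 Fract_diff1 Fract_mult1 Fract_power1)
  also have "Q^2 = Fract (q^2) 1" unfolding Q_def Fract_power1 ..
  finally show ?thesis using q0 by (simp add: divide_fract)
qed


lemma vanish_pos:
  fixes N D :: "'a::field poly"
  assumes D0: "D \<noteq> 0" and Nc: "poly N c = 0" and Dc: "poly D c \<noteq> 0"
  shows "vanishes_at c (Fract N D)"
proof (cases "N = 0")
  case True then show ?thesis unfolding vanishes_at_def by (simp add: fract_collapse)
next
  case False
  have o1: "order c N > 0" using False Nc by (simp add: order_gt_0_iff)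
  have o2: "order c D = 0" using Dc by (simp add: order_0I)
  have "N \<noteq> 0 \<and> D \<noteq> 0 \<and> Fract N D = Fract N D \<and> int (order c N) - int (order c D) > 0"
    using False D0 o1 o2 by simp
  then have "\<exists>p q. p \<noteq> 0 \<and> q \<noteq> 0 \<and> Fract N D = Fract p q \<and> int (order c p) - int (order c q) > 0"
    by (rule exI[of _ N, OF exI[of _ D]])
  then show ?thesis unfolding vanishes_at_def by (rule disjI2)
qed

lemma vanish_neg:
  fixes N D :: "'a::field poly"
  assumes N0: "N \<noteq> 0" and D0: "D \<noteq> 0" and Nc: "poly N c \<noteq> 0" and Dc: "poly D c \<noteq> 0"
  shows "\<not> vanishes_at c (Fract N D)"
proof -
  have nz: "Fract N D \<noteq> 0" using N0 D0 by (simp add: Zero_fract_def eq_fract)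
  have key: "\<not> (int (order c p) - int (order c q) > 0)"
    if p0: "p \<noteq> 0" and q0: "q \<noteq> 0" and e: "Fract N D = Fract p q" for p q
  proof -
    have "N * q = p * D" using e D0 q0 by (simp add: eq_fract)
    hence "order c (N * q) = order c (p * D)" by simp
    hence "order c N + order c q = order c p + order c D"
      using N0 D0 p0 q0 by (simp add: order_mult)
    moreover have "order c N = 0" "order c D = 0" using Nc Dc by (simp_all add: order_0I)
    ultimately show ?thesis by simp
  qed
  show ?thesis
  proof
    assume "vanishes_at c (Fract N D)"
    then have "Fract N D = 0 \<or> (\<exists>p q. p \<noteq> 0 \<and> q \<noteq> 0 \<and> Fract N D = Fract p q \<and> int (order c p) - int (order c q) > 0)"
      unfolding vanishes_at_def .
    then show False
    proof
      assume "Fract N D = 0" with nz show False by simp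
    next
      assume "\<exists>p q. p \<noteq> 0 \<and> q \<noteq> 0 \<and> Fract N D = Fract p q \<and> int (order c p) - int (order c q) > 0"
      then obtain p q where "p \<noteq> 0" "q \<noteq> 0" "Fract N D = Fract p q" "int (order c p) - int (order c q) > 0"
        by blast
      with key show False by blast
    qed
  qed
qed

lemma degree_eq_sum_order:
  fixes p :: "'a::alg_closed_field poly"
  assumes "p \<noteq> 0"
  shows "degree p = (\<Sum>x | poly p x = 0. order x p)"
  using degree_le_sum_order[OF assms] sum_order_le_degree[OF assms] by simp

lemma no_common_root:
  fixes p q :: "'a::field poly"
  assumes "coprime p q" "poly p x = 0" "poly q x = 0"
  shows False
proof -
  have "[:-x,1:] dvd p" "[:-x,1:] dvd q" using assms(2,3) by (simp_all add: poly_eq_0_iff_dvd)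
  hence "is_unit [:-x,1:]" using assms(1) coprime_common_divisor by blast
  thus False by (simp add: is_unit_iff_degree)
qed

lemma height_eq:
  fixes p q :: "'a::alg_closed_field poly"
  assumes q0: "q \<noteq> 0" and cop: "coprime p q"
  shows "height (Fract p q) = max (degree p) (degree q)"
  unfolding height_def
proof (rule the_equality)
  show "\<exists>p' q'. q' \<noteq> 0 \<and> coprime p' q' \<and> Fract p q = Fract p' q' \<and> max (degree p) (degree q) = max (degree p') (degree q')"
    using q0 cop by blast
next
  fix n assume "\<exists>p' q'. q' \<noteq> 0 \<and> coprime p' q' \<and> Fract p q = Fract p' q' \<and> n = max (degree p') (degree q')"
  then obtain p' q' where q0': "q' \<noteq> 0" and cop': "coprime p' q'" and e: "Fract p q = Fract p' q'"
    and n: "n = max (degree p') (degree q')" by blast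
  have eq: "p * q' = p' * q" using e q0 q0' by (simp add: eq_fract)
  show "n = max (degree p) (degree q)"
  proof (cases "p = 0")
    case True
    then have p0': "p' = 0" using eq q0 by simp
    have "is_unit q" using cop True by simp
    hence "degree q = 0" using q0 by (simp add: is_unit_iff_degree)
    moreover have "is_unit q'" using cop' p0' by simp
    hence "degree q' = 0" using q0' by (simp add: is_unit_iff_degree)
    ultimately show ?thesis using n True p0' by simp
  next
    case False
    then have p0': "p' \<noteq> 0" using eq q0' by auto
    have oq: "order x q = order x q'" for x
    proof -
      have "order x (p * q') = order x (p' * q)" using eq by simp
      hence E: "order x p + order x q' = order x p' + order x q"
        using False p0' q0 q0' by (simp add: order_mult)
      have A: "order x p = 0 \<or> order x q = 0"
        using no_common_root[OF cop, of x] False q0 by (auto simp: order_root)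
      have B: "order x p' = 0 \<or> order x q' = 0"
        using no_common_root[OF cop', of x] p0' q0' by (auto simp: order_root)
      show ?thesis using A B E by auto
    qed
    have Z: "{x. poly q x = 0} = {x. poly q' x = 0}"
      using oq q0 q0' by (auto simp: order_root)
    have dq: "degree q = degree q'"
      unfolding degree_eq_sum_order[OF q0] degree_eq_sum_order[OF q0'] Z oq ..
    have "degree (p * q') = degree (p' * q)" using eq by simp
    hence "degree p = degree p'" using False p0' q0 q0' dq by (simp add: degree_mult_eq)
    then show ?thesis using n dq by simp
  qed
qed

lemma fract_coprime_repr:
  fixes x :: "'a::field poly fract"
  shows "\<exists>p q. q \<noteq> 0 \<and> coprime p q \<and> x = Fract p q"
proof -
  define P where "P = (\<lambda>n. \<exists>a b. b \<noteq> 0 \<and> x = Fract a b \<and> degree b = n)"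
  have ex: "\<exists>n. P n" unfolding P_def by (cases x) auto
  define n0 where "n0 = (LEAST n. P n)"
  have "P n0" unfolding n0_def using ex by (rule LeastI_ex)
  then obtain a b where b0: "b \<noteq> 0" and x: "x = Fract a b" and db: "degree b = n0"
    unfolding P_def by blast
  have "coprime a b"
  proof (rule coprimeI)
    fix d assume da: "d dvd a" and dbv: "d dvd b"
    obtain a' where a': "a = d * a'" using da by (elim dvdE)
    obtain b' where b': "b = d * b'" using dbv by (elim dvdE)
    have d0: "d \<noteq> 0" using b0 b' by auto
    have b0': "b' \<noteq> 0" using b0 b' by auto
    have "x = Fract a' b'" unfolding x a' b' using d0 by (simp add: mult_fract_cancel)
    hence "P (degree b')" unfolding P_def using b0' by blast
    hence "n0 \<le> degree b'" unfolding n0_def by (rule Least_le)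
    moreover have "degree b = degree d + degree b'" using b' d0 b0' by (simp add: degree_mult_eq)
    ultimately have "degree d = 0" using db by simp
    thus "is_unit d" using d0 by (simp add: is_unit_iff_degree)
  qed
  then show ?thesis using b0 x by blast
qed

theorem lemma5p10:
  fixes \<beta> :: "'a::{alg_closed_field, field_char_0} ratfun"
  assumes "height \<beta> = 1 \<or> height \<beta> = 2"
  shows "\<exists>c::'a. vanishes_at c (Phi3 \<beta>) \<and> \<not> vanishes_at c (Phi1 \<beta>) \<and> \<not> vanishes_at c \<beta>"
proof -
  obtain p q where q0: "q \<noteq> 0" and cop: "coprime p q" and b: "\<beta> = Fract p q"
    using fract_coprime_repr by blast
  have h: "max (degree p) (degree q) = 1 \<or> max (degree p) (degree q) = 2"
    using assms height_eq[OF q0 cop] b by simp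
  obtain c where Hc: "poly (hom3 p q [:0,1:]) c = 0" and pc: "poly p c \<noteq> 0"
    and Fc: "poly (F1p p q) c \<noteq> 0"
    using core[OF cop q0 h] by blast
  have qc: "poly q c \<noteq> 0"
  proof
    assume "poly q c = 0"
    then have "poly (hom3 p q [:0,1:]) c = (poly p c)^6" by (simp add: poly_hom3 hom3_def)
    with Hc pc show False by simp
  qed
  have p0: "p \<noteq> 0" using pc by auto
  have F0: "F1p p q \<noteq> 0" using Fc by auto
  have "vanishes_at c (Phi3 \<beta>)"
    unfolding b Phi3_eq[OF q0] by (rule vanish_pos) (use q0 Hc qc in auto)
  moreover have "\<not> vanishes_at c (Phi1 \<beta>)"
    unfolding b Phi1_eq[OF q0] by (rule vanish_neg) (use F0 q0 Fc qc in auto)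
  moreover have "\<not> vanishes_at c \<beta>"
    unfolding b by (rule vanish_neg[OF p0 q0 pc qc])
  ultimately show ?thesis by blast
qed

end
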